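(* The utilization-based dynamic posted-price (UDPP) mechanism is ex post incentive compatible for myopic bidders and dominant-strategy incentive compatible for myopic miners.
   Context: Dynamic posted-price setting: at each time step a block with $m$ slots is produced by an active miner; $n$ bidders with private values $v_i\ge 0$ submit bids $b_i$, each participating only once. Given the current posted price $q>0$, the eligible set is $M(q)=\{i:b_i\ge q\}$. A block is a set $B\subseteq M(q)$ with $|B|\le m$; each $i\in B$ receives a slot and pays $q$. The next price is $T(q,B)$. The UDPP mechanism uses the random maximal (RM) allocation rule — the miner selects $B$ uniformly at random among subsets of $M(q)$ of size $\min\{m,|M(q)|\}$ — and the update rule $T_U(q,B)=\alpha\frac{|B|}{m}(1+\delta)q+(1-\alpha)q$ with $\alpha\in(0,1)$, $\delta\in(0,\infty)$. A myopic bidder's utility is $v_i-q$ if included and $0$ otherwise (in expectation over allocation randomness); ex post IC for myopic bidders means that, when the miner follows the RM rule, bidding $b_i=v_i$ weakly dominates every other bid for every bidder, for all bids of the others. A myopic miner's utility is the total payment $q|B|$ in the current block; DSIC for myopic miners means following the RM rule is a weakly dominant, utility-maximizing strategy for the miner for all bids. *)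

theory Defs
  imports "HOL-Probability.Probability"
begin

text \<open>Bidders are indexed by 0..n-1; bids are a function nat => real (only indices < n matter).
  The current posted price is q > 0 and a block has m slots.\<close>

definition eligible :: "nat \<Rightarrow> real \<Rightarrow> (nat \<Rightarrow> real) \<Rightarrow> nat set" where
  "eligible n q b = {i. i < n \<and> q \<le> b i}"

definition feasible_blocks :: "nat \<Rightarrow> nat \<Rightarrow> real \<Rightarrow> (nat \<Rightarrow> real) \<Rightarrow> nat set set" where
  "feasible_blocks n m q b = {B. B \<subseteq> eligible n q b \<and> card B \<le> m}"

definition rm_alloc :: "nat \<Rightarrow> nat \<Rightarrow> real \<Rightarrow> (nat \<Rightarrow> real) \<Rightarrow> nat set pmf" where
  "rm_alloc n m q b = pmf_of_set
     {B. B \<subseteq> eligible n q b \<and> card B = min m (card (eligible n q b))}"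

definition udpp_update :: "real \<Rightarrow> real \<Rightarrow> nat \<Rightarrow> real \<Rightarrow> nat set \<Rightarrow> real" where
  "udpp_update \<alpha> \<delta> m q B = \<alpha> * (real (card B) / real m) * (1 + \<delta>) * q + (1 - \<alpha>) * q"

definition bidder_utility :: "nat \<Rightarrow> nat \<Rightarrow> real \<Rightarrow> (nat \<Rightarrow> real) \<Rightarrow> nat \<Rightarrow> real \<Rightarrow> real" where
  "bidder_utility n m q b i vi =
     measure_pmf.expectation (rm_alloc n m q b) (\<lambda>B. if i \<in> B then vi - q else 0)"

definition miner_utility :: "real \<Rightarrow> nat set \<Rightarrow> real" where
  "miner_utility q B = q * real (card B)"

definition ex_post_IC_myopic_bidders :: "nat \<Rightarrow> nat \<Rightarrow> real \<Rightarrow> bool" where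
  "ex_post_IC_myopic_bidders n m q \<longleftrightarrow>
     (\<forall>i<n. \<forall>vi\<ge>0. \<forall>b. \<forall>b'\<ge>0. (\<forall>j<n. 0 \<le> b j) \<longrightarrow>
        bidder_utility n m q (b(i := b')) i vi \<le> bidder_utility n m q (b(i := vi)) i vi)"

definition DSIC_myopic_miners :: "nat \<Rightarrow> nat \<Rightarrow> real \<Rightarrow> bool" where
  "DSIC_myopic_miners n m q \<longleftrightarrow>
     (\<forall>b. (\<forall>j<n. 0 \<le> b j) \<longrightarrow>
        set_pmf (rm_alloc n m q b) \<subseteq> feasible_blocks n m q b \<and>
        (\<forall>D. set_pmf D \<subseteq> feasible_blocks n m q b \<longrightarrow>
           measure_pmf.expectation D (miner_utility q)
             \<le> measure_pmf.expectation (rm_alloc n m q b) (miner_utility q)))"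

end

theory Submission
  imports Defs
begin

lemma finite_elig: "finite (eligible n q b)"
  unfolding eligible_def by auto

lemma set_rm: "set_pmf (rm_alloc n m q b) =
  {B. B \<subseteq> eligible n q b \<and> card B = min m (card (eligible n q b))}"
proof -
  let ?E = "eligible n q b"
  let ?S = "{B. B \<subseteq> ?E \<and> card B = min m (card ?E)}"
  have f: "finite ?S" using finite_elig[of n q b]
    by (rule_tac finite_subset[of _ "Pow ?E"]) auto
  obtain B where "B \<subseteq> ?E" "card B = min m (card ?E)"
    using obtain_subset_with_card_n[of "min m (card ?E)" ?E] by auto
  hence ne: "?S \<noteq> {}" by auto
  show ?thesis unfolding rm_alloc_def using f ne by simp
qed

lemma not_elig_zero:
  assumes "i \<notin> eligible n q b"
  shows "bidder_utility n m q b i v = 0"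
proof -
  have "bidder_utility n m q b i v = measure_pmf.expectation (rm_alloc n m q b) (\<lambda>B. 0::real)"
    unfolding bidder_utility_def
    by (rule integral_cong_AE) (use assms in \<open>auto simp: AE_measure_pmf_iff set_rm\<close>)
  thus ?thesis by simp
qed

lemma elig_nonneg:
  assumes "q \<le> v"
  shows "0 \<le> bidder_utility n m q b i v"
  unfolding bidder_utility_def
  by (rule integral_nonneg_AE) (use assms in \<open>auto simp: AE_measure_pmf_iff\<close>)

lemma elig_nonpos:
  assumes "v < q"
  shows "bidder_utility n m q b i v \<le> 0"
proof -
  have "0 \<le> measure_pmf.expectation (rm_alloc n m q b) (\<lambda>B. - (if i \<in> B then v - q else 0))"
    by (rule integral_nonneg_AE) (use assms in \<open>auto simp: AE_measure_pmf_iff\<close>)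
  thus ?thesis unfolding bidder_utility_def by simp
qed

theorem mainTheorem3:
  fixes n m :: nat and q \<alpha> \<delta> :: real
  assumes "m \<ge> 1" and "q > 0" and "0 < \<alpha>" and "\<alpha> < 1" and "\<delta> > 0"
  shows "ex_post_IC_myopic_bidders n m q \<and> DSIC_myopic_miners n m q"
proof
  show "ex_post_IC_myopic_bidders n m q"
    unfolding ex_post_IC_myopic_bidders_def
  proof (intro allI impI)
    fix i :: nat and vi b' :: real and b :: "nat \<Rightarrow> real"
    assume i: "i < n" and vi: "0 \<le> vi" and b': "0 \<le> b'" and bj: "\<forall>j<n. 0 \<le> b j"
    show "bidder_utility n m q (b(i := b')) i vi \<le> bidder_utility n m q (b(i := vi)) i vi"
    proof (cases "q \<le> vi")
      case True
      show ?thesis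
      proof (cases "q \<le> b'")
        case True
        have "eligible n q (b(i := b')) = eligible n q (b(i := vi))"
          using True \<open>q \<le> vi\<close> unfolding eligible_def by auto
        hence "rm_alloc n m q (b(i := b')) = rm_alloc n m q (b(i := vi))"
          unfolding rm_alloc_def by simp
        thus ?thesis unfolding bidder_utility_def by simp
      next
        case False
        hence "i \<notin> eligible n q (b(i := b'))" unfolding eligible_def by auto
        thus ?thesis using not_elig_zero elig_nonneg[OF \<open>q \<le> vi\<close>] by simp
      qed
    next
      case False
      hence "i \<notin> eligible n q (b(i := vi))" unfolding eligible_def by auto
      thus ?thesis using not_elig_zero elig_nonpos False by simp
    qed
  qed
next
  show "DSIC_myopic_miners n m q"
    unfolding DSIC_myopic_miners_def
  proof (intro allI impI, rule conjI)
    fix b :: "nat \<Rightarrow> real"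
    let ?E = "eligible n q b"
    let ?c = "q * real (min m (card ?E))"
    show "set_pmf (rm_alloc n m q b) \<subseteq> feasible_blocks n m q b"
      unfolding set_rm feasible_blocks_def by auto
    have rm: "measure_pmf.expectation (rm_alloc n m q b) (miner_utility q) =
        measure_pmf.expectation (rm_alloc n m q b) (\<lambda>B. ?c)"
      by (rule integral_cong_AE) (auto simp: AE_measure_pmf_iff set_rm miner_utility_def)
    show "\<forall>D. set_pmf D \<subseteq> feasible_blocks n m q b \<longrightarrow>
           measure_pmf.expectation D (miner_utility q)
             \<le> measure_pmf.expectation (rm_alloc n m q b) (miner_utility q)"
    proof (intro allI impI)
      fix D assume D: "set_pmf D \<subseteq> feasible_blocks n m q b"
      have fin: "finite (feasible_blocks n m q b)" unfolding feasible_blocks_def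
        using finite_elig[of n q b] by (rule_tac finite_subset[of _ "Pow ?E"]) auto
      have "finite (set_pmf D)" using D fin finite_subset by blast
      hence int: "integrable (measure_pmf D) (miner_utility q)"
        by (rule integrable_measure_pmf_finite)
      have "\<forall>B\<in>set_pmf D. miner_utility q B \<le> ?c"
      proof
        fix B assume "B \<in> set_pmf D"
        hence B: "B \<subseteq> ?E" "card B \<le> m" using D unfolding feasible_blocks_def by auto
        have "card B \<le> card ?E" using B(1) finite_elig card_mono by blast
        hence "card B \<le> min m (card ?E)" using B(2) by simp
        thus "miner_utility q B \<le> ?c" unfolding miner_utility_def
          using assms(2) by (simp add: mult_left_mono)
      qed
      hence "measure_pmf.expectation D (miner_utility q) \<le> ?c"
        by (intro measure_pmf.integral_le_const int) (simp add: AE_measure_pmf_iff)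
      thus "measure_pmf.expectation D (miner_utility q)
             \<le> measure_pmf.expectation (rm_alloc n m q b) (miner_utility q)"
        using rm by simp
    qed
  qed
qed

end
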